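(* Let $p(x)=a_dx^d+\cdots+a_1x$ be a real polynomial of degree $d\ge2$ with $p(0)=0$, $p'(0)=\lambda>1$, whose Fatou component $\mathcal{F}_\infty$ containing $\infty$ contains an angular region $W_\beta=\{z\ne0:|\arg z|<\beta\}$ for some $\beta>0$, and let $\mathcal{J}_p$ denote its Julia set. Let $\Phi$ be the entire solution of $\Phi(\lambda z)=p(\Phi(z))$, $\Phi(0)=0$, $\Phi'(0)=1$, let $\rho=\log_\lambda d$, and let $F$ be the $1$-periodic holomorphic function on $\{|\Im w|<\beta/\log\lambda\}$ such that for all $\varepsilon>0$, $M>0$, $\Phi(z)=a_d^{-1/(d-1)}\exp\left(z^\rho F(\log_\lambda z)+o(|z|^{-M})\right)$ uniformly as $|z|\to\infty$ in $|\arg z|\le\beta-\varepsilon$. Assume that $\mathcal{J}_p\subset\mathbb{R}^-$ and that $\Phi$ is unbounded on $\mathbb{R}^-$. Then $F$ is not constant.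
   Context: $\mathbb{R}^-$ denotes the negative real half-axis (the Julia set always contains the repelling fixed point $0$, so $\mathcal{J}_p\subset\mathbb{R}^-$ is to be read as $\mathcal{J}_p\subset(-\infty,0]$). $\log_\lambda z=\log z/\log\lambda$. *)

theory Defs
  imports "HOL-Complex_Analysis.Complex_Analysis" "HOL-Computational_Algebra.Polynomial"
begin

definition cpoly :: "real poly \<Rightarrow> complex \<Rightarrow> complex" where
  "cpoly p = poly (map_poly complex_of_real p)"

definition filled_julia :: "real poly \<Rightarrow> complex set" where
  "filled_julia p = {z. bounded (range (\<lambda>n. (cpoly p ^^ n) z))}"

definition julia :: "real poly \<Rightarrow> complex set" where
  "julia p = frontier (filled_julia p)"

text \<open>The Fatou component containing infinity (basin of infinity), intersected with the plane.\<close>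
definition basin_infty :: "real poly \<Rightarrow> complex set" where
  "basin_infty p = {z. filterlim (\<lambda>n. (cpoly p ^^ n) z) at_infinity sequentially}"

definition sector :: "real \<Rightarrow> complex set" where
  "sector \<beta> = {z. z \<noteq> 0 \<and> \<bar>Arg z\<bar> < \<beta>}"

definition clog_base :: "real \<Rightarrow> complex \<Rightarrow> complex" where
  "clog_base b z = Ln z / complex_of_real (ln b)"

end

theory Submission
  imports Defs
begin

locale pd =
  fixes p :: "real poly" and d :: nat
  assumes deg: "degree p = d" and d2: "2 \<le> d"
begin

abbreviation P where "P \<equiv> cpoly p"

definition a :: complex where "a = complex_of_real (lead_coeff p)"

lemma p_nz: "p \<noteq> 0" using deg d2 by auto

lemma a_nz: "a \<noteq> 0" using p_nz by (simp add: a_def)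

lemma P_sum: "P u = (\<Sum>i\<le>d. complex_of_real (coeff p i) * u ^ i)"
proof -
  have "degree (map_poly complex_of_real p) = d"
    using deg by (subst degree_map_poly) auto
  then show ?thesis unfolding cpoly_def poly_altdef
    by (simp add: coeff_map_poly)
qed

lemma P_holo: "P holomorphic_on S"
  unfolding cpoly_def by (intro holomorphic_intros)

lemma Pn_holo: "(P ^^ n) holomorphic_on S"
proof (induction n)
  case 0 then show ?case by (simp add: id_def)
next
  case (Suc n)
  have "P \<circ> (P ^^ n) holomorphic_on S"
    by (rule holomorphic_on_compose_gen[OF Suc P_holo]) auto
  then show ?case by (simp add: comp_def)
qed

lemma Pn_cont: "continuous_on S (P ^^ n)"
  using Pn_holo holomorphic_on_imp_continuous_on by blast

lemma P_cont: "continuous_on S P"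
  using P_holo holomorphic_on_imp_continuous_on by blast

lemma P_minus_lead:
  assumes "1 \<le> norm u"
  shows "norm (P u - a * u ^ d) \<le> (\<Sum>i<d. \<bar>coeff p i\<bar>) * norm u ^ (d - 1)"
proof -
  have "P u - a * u ^ d = (\<Sum>i<d. complex_of_real (coeff p i) * u ^ i)"
    using d2 deg by (simp add: P_sum a_def lessThan_Suc_atMost[symmetric])
  also have "norm \<dots> \<le> (\<Sum>i<d. \<bar>coeff p i\<bar> * norm u ^ (d - 1))"
  proof (rule order_trans[OF norm_sum sum_mono])
    fix i assume "i \<in> {..<d}"
    then have "norm u ^ i \<le> norm u ^ (d - 1)"
      using assms by (intro power_increasing) auto
    then show "norm (complex_of_real (coeff p i) * u ^ i) \<le> \<bar>coeff p i\<bar> * norm u ^ (d - 1)"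
      by (simp add: norm_mult norm_power mult_left_mono)
  qed
  finally show ?thesis by (simp add: sum_distrib_right)
qed

lemma growth: "\<exists>R\<ge>1. \<forall>u. R \<le> norm u \<longrightarrow> norm (P u / (a * u ^ d) - 1) \<le> 1/2 \<and> 2 * norm u \<le> norm (P u)"
proof -
  define S where "S = (\<Sum>i<d. \<bar>coeff p i\<bar>)"
  have S0: "S \<ge> 0" unfolding S_def by (auto intro: sum_nonneg)
  have an: "norm a > 0" using a_nz by simp
  define R where "R = max 1 (max (2 * S / norm a) (4 / norm a))"
  have R1: "R \<ge> 1" unfolding R_def by simp
  show ?thesis
  proof (intro exI[of _ R] conjI allI impI R1)
    fix u :: complex assume uR: "R \<le> norm u"
    have u1: "1 \<le> norm u" using R1 uR by simp
    have unz: "u \<noteq> 0" using u1 by auto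
    have nud: "norm u ^ d = norm u * norm u ^ (d - 1)"
      using d2 by (metis Suc_diff_le diff_Suc_1 le_trans one_le_numeral power_Suc)
    have upos: "norm u ^ (d-1) > 0" using u1 by (intro zero_less_power) linarith
    have B: "norm (P u - a * u ^ d) \<le> S * norm u ^ (d - 1)"
      using P_minus_lead[OF u1] by (simp add: S_def)
    have "S * norm u ^ (d - 1) \<le> (1/2) * (norm a * norm u ^ d)"
    proof -
      have "2 * S / norm a \<le> norm u" using uR unfolding R_def by linarith
      then have "2 * S \<le> norm a * norm u" using an by (simp add: divide_le_eq mult.commute)
      then have "2 * S * norm u ^ (d-1) \<le> norm a * norm u * norm u ^ (d-1)"
        using upos by (intro mult_right_mono) auto
      then show ?thesis using nud by (simp add: algebra_simps)
    qed
    with B have B2: "norm (P u - a * u ^ d) \<le> (1/2) * norm (a * u ^ d)"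
      by (simp add: norm_mult norm_power)
    have anz: "a * u ^ d \<noteq> 0" using a_nz unz by simp
    have "P u / (a * u ^ d) - 1 = (P u - a * u ^ d) / (a * u ^ d)"
      using anz by (simp add: field_simps)
    then show "norm (P u / (a * u ^ d) - 1) \<le> 1/2"
      using B2 anz by (simp add: norm_divide divide_le_eq)
    have "norm (a * u ^ d) \<le> norm (P u) + norm (P u - a * u ^ d)"
      using norm_triangle_ineq4[of "P u" "P u - a * u ^ d"] by simp
    then have L: "(1/2) * (norm a * norm u ^ d) \<le> norm (P u)"
      using B2 by (simp add: norm_mult norm_power)
    have "4 / norm a \<le> norm u" using uR unfolding R_def by linarith
    then have "4 \<le> norm a * norm u" using an by (simp add: divide_le_eq mult.commute)
    moreover have "norm u \<le> norm u ^ (d - 1)"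
      using power_increasing[of 1 "d-1" "norm u"] u1 d2 by simp
    ultimately have "4 * norm u ^ (d-1) \<le> norm a * norm u * norm u ^ (d-1)"
      using upos by (intro mult_right_mono) auto
    with \<open>norm u \<le> norm u ^ (d - 1)\<close> have "4 * norm u \<le> norm a * norm u * norm u ^ (d-1)"
      by linarith
    then show "2 * norm u \<le> norm (P u)" using L nud by (simp add: algebra_simps)
  qed
qed

end

context pd begin

definition R :: real where
  "R = (SOME R. R \<ge> 1 \<and> (\<forall>u. R \<le> norm u \<longrightarrow> norm (P u / (a * u ^ d) - 1) \<le> 1/2 \<and> 2 * norm u \<le> norm (P u)))"

lemma R_props: "R \<ge> 1" "\<And>u. R \<le> norm u \<Longrightarrow> norm (P u / (a * u ^ d) - 1) \<le> 1/2"
  "\<And>u. R \<le> norm u \<Longrightarrow> 2 * norm u \<le> norm (P u)"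
  using someI_ex[OF growth, folded R_def] by auto

lemma R_pos: "R > 0" using R_props(1) by linarith

lemma norm_y_bounds:
  assumes "R \<le> norm u"
  shows "1/2 \<le> norm (P u / (a * u ^ d))" "norm (P u / (a * u ^ d)) \<le> 3/2"
proof -
  have h: "norm (P u / (a * u ^ d) - 1) \<le> 1/2" using R_props(2)[OF assms] .
  have "1 \<le> norm (P u / (a * u ^ d)) + norm (P u / (a * u ^ d) - 1)"
    using norm_triangle_ineq4[of "P u / (a * u ^ d)" "P u / (a * u ^ d) - 1"] by simp
  with h show "1/2 \<le> norm (P u / (a * u ^ d))" by linarith
  have "norm (P u / (a * u ^ d)) \<le> norm (P u / (a * u ^ d) - 1) + 1"
    using norm_triangle_ineq[of "P u / (a * u ^ d) - 1" 1] by simp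
  with h show "norm (P u / (a * u ^ d)) \<le> 3/2" by linarith
qed

lemma ln_ratio:
  assumes "R \<le> norm u"
  shows "ln (norm (P u)) - d * ln (norm u) = ln (norm a) + ln (norm (P u / (a * u ^ d)))"
proof -
  have u0: "u \<noteq> 0" using assms R_pos by auto
  have Pu0: "P u \<noteq> 0" using R_props(3)[OF assms] u0 by auto
  have "norm (P u / (a * u ^ d)) = norm (P u) / (norm a * norm u ^ d)"
    by (simp add: norm_divide norm_mult norm_power)
  then have "ln (norm (P u / (a * u ^ d))) = ln (norm (P u)) - ln (norm a) - d * ln (norm u)"
    using u0 Pu0 a_nz by (simp add: ln_div ln_mult ln_realpow)
  then show ?thesis by simp
qed

lemma abs_ln_le: "1/2 \<le> (y::real) \<Longrightarrow> y \<le> 3/2 \<Longrightarrow> \<bar>ln y\<bar> \<le> ln 2"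
proof -
  assume y: "1/2 \<le> y" "y \<le> 3/2"
  have "ln y \<le> ln 2" using y by (subst ln_le_cancel_iff) auto
  moreover have "ln (1/2) \<le> ln y" using y by (subst ln_le_cancel_iff) auto
  ultimately show ?thesis by (simp add: ln_div)
qed

lemma C_exists: "\<exists>C\<ge>0. \<forall>w. \<bar>ln (max (norm (P w)) R) - d * ln (max (norm w) R)\<bar> \<le> C"
proof -
  have "compact (P ` cball 0 R)" by (intro compact_continuous_image P_cont compact_cball)
  then obtain M where M: "\<And>w. w \<in> cball 0 R \<Longrightarrow> norm (P w) \<le> M"
    using compact_imp_bounded bounded_iff by (metis image_eqI)
  define C where "C = max (\<bar>ln (norm a)\<bar> + ln 2) (ln (max M R) + d * ln R)"
  have lnR: "ln R \<ge> 0" using R_props(1) by simp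
  show ?thesis
  proof (intro exI[of _ C] conjI allI)
    show "C \<ge> 0" unfolding C_def by (simp add: max.coboundedI1)
    fix w
    show "\<bar>ln (max (norm (P w)) R) - d * ln (max (norm w) R)\<bar> \<le> C"
    proof (cases "R \<le> norm w")
      case True
      have "2 * norm w \<le> norm (P w)" using R_props(3)[OF True] .
      then have m1: "max (norm (P w)) R = norm (P w)" using True R_pos by simp
      have m2: "max (norm w) R = norm w" using True by simp
      have yb: "1/2 \<le> norm (P w / (a * w ^ d))" "norm (P w / (a * w ^ d)) \<le> 3/2"
        using norm_y_bounds[OF True] by blast+
      have "\<bar>ln (norm (P w / (a * w ^ d)))\<bar> \<le> ln 2"
        by (rule abs_ln_le[OF yb])
      then show ?thesis using ln_ratio[OF True] unfolding m1 m2 C_def by linarith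
    next
      case False
      then have m2: "max (norm w) R = R" by simp
      have "norm (P w) \<le> M" using M False by simp
      then have "ln (max (norm (P w)) R) \<le> ln (max M R)" using R_pos by (subst ln_le_cancel_iff) auto
      moreover have "ln (max (norm (P w)) R) \<ge> 0" using R_props(1) by simp
      moreover have "d * ln R \<ge> 0" using lnR by simp
      ultimately show ?thesis unfolding m2 C_def by linarith
    qed
  qed
qed

definition C :: real where "C = (SOME C. C \<ge> 0 \<and> (\<forall>w. \<bar>ln (max (norm (P w)) R) - d * ln (max (norm w) R)\<bar> \<le> C))"

lemma C_props: "C \<ge> 0" "\<bar>ln (max (norm (P w)) R) - d * ln (max (norm w) R)\<bar> \<le> C"
  using someI_ex[OF C_exists, folded C_def] by auto

definition g :: "nat \<Rightarrow> complex \<Rightarrow> real" where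
  "g n w = ln (max (norm ((P ^^ n) w)) R) / real d ^ n"

lemma d_pos: "real d > 0" using d2 by simp

lemma g_step: "\<bar>g (Suc n) w - g n w\<bar> \<le> C / real d ^ Suc n"
proof -
  define u where "u = (P ^^ n) w"
  have "g (Suc n) w - g n w = (ln (max (norm (P u)) R) - d * ln (max (norm u) R)) / real d ^ Suc n"
    unfolding g_def u_def using d_pos by (simp add: field_simps)
  then show ?thesis using C_props(2)[of u] d_pos by (simp add: abs_div divide_right_mono)
qed

lemma g_nonneg: "g n w \<ge> 0"
  unfolding g_def using R_props(1) by (simp add: max.coboundedI2)

lemma summ_geo: "summable (\<lambda>j. C / real d ^ Suc j)" "(\<Sum>j. C / real d ^ Suc j) = C / (d - 1)"
proof -
  have q: "norm (1 / real d) < 1" using d2 by simp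
  have s: "(\<lambda>j. (1 / real d) ^ j) sums (1 / (1 - 1 / real d))" using geometric_sums[OF q] .
  have e: "(\<lambda>j. C / real d ^ Suc j) = (\<lambda>j. (C / d) * (1 / real d) ^ j)"
    by (auto simp: power_divide field_simps)
  have "(\<lambda>j. C / real d ^ Suc j) sums ((C / d) * (1 / (1 - 1 / real d)))"
    unfolding e by (intro sums_mult s)
  moreover have "(C / d) * (1 / (1 - 1 / real d)) = C / (d - 1)"
    using d2 by (simp add: field_simps)
  ultimately show "summable (\<lambda>j. C / real d ^ Suc j)" "(\<Sum>j. C / real d ^ Suc j) = C / (d - 1)"
    by (auto simp: sums_iff)
qed

definition G :: "complex \<Rightarrow> real" where
  "G w = g 0 w + (\<Sum>j. g (Suc j) w - g j w)"

lemma summ_g: "summable (\<lambda>j. g (Suc j) w - g j w)"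
  by (rule summable_comparison_test[OF _ summ_geo(1)]) (use g_step in auto)

lemma G_lim: "(\<lambda>n. g n w) \<longlonglongrightarrow> G w"
proof -
  have "(\<lambda>n. \<Sum>j<n. g (Suc j) w - g j w) \<longlonglongrightarrow> (\<Sum>j. g (Suc j) w - g j w)"
    using summable_LIMSEQ[OF summ_g] .
  then have "(\<lambda>n. g 0 w + (\<Sum>j<n. g (Suc j) w - g j w)) \<longlonglongrightarrow> G w"
    unfolding G_def by (intro tendsto_add tendsto_const)
  moreover have "\<And>n. g 0 w + (\<Sum>j<n. g (Suc j) w - g j w) = g n w"
    using sum_lessThan_telescope[of "\<lambda>j. g j w"] by simp
  ultimately show ?thesis by simp
qed

lemma g_cont: "continuous_on UNIV (g n)"
  unfolding g_def
  using R_pos d2 by (intro continuous_intros continuous_on_compose2[OF Pn_cont[of UNIV n]]) auto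

lemma G_cont: "continuous_on UNIV G"
proof -
  have u: "uniform_limit UNIV (\<lambda>n w. \<Sum>j<n. g (Suc j) w - g j w) (\<lambda>w. \<Sum>j. g (Suc j) w - g j w) sequentially"
    by (rule Weierstrass_m_test[OF _ summ_geo(1)]) (use g_step in auto)
  have "continuous_on UNIV (\<lambda>w. \<Sum>j. g (Suc j) w - g j w)"
    by (rule uniform_limit_theorem[OF _ u]) (auto intro!: always_eventually continuous_on_sum continuous_on_diff g_cont)
  then show ?thesis unfolding G_def by (intro continuous_intros g_cont)
qed

lemma G_g0: "\<bar>G w - g 0 w\<bar> \<le> C / (d - 1)"
proof -
  have as: "summable (\<lambda>j. \<bar>g (Suc j) w - g j w\<bar>)"
    by (rule summable_comparison_test[OF _ summ_geo(1)]) (use g_step in auto)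
  have "\<bar>\<Sum>j. g (Suc j) w - g j w\<bar> \<le> (\<Sum>j. \<bar>g (Suc j) w - g j w\<bar>)"
    by (rule summable_rabs[OF as])
  also have "\<dots> \<le> (\<Sum>j. C / real d ^ Suc j)"
    by (rule suminf_le[OF _ as summ_geo(1)]) (use g_step in auto)
  finally have "\<bar>\<Sum>j. g (Suc j) w - g j w\<bar> \<le> (\<Sum>j. C / real d ^ Suc j)" .
  then show ?thesis unfolding G_def summ_geo(2) by simp
qed

end

context pd begin

lemma geo_X: "summable (\<lambda>j. X / real d ^ Suc j)"
proof -
  have q: "norm (1 / real d) < 1" using d2 by simp
  have e: "(\<lambda>j. X / real d ^ Suc j) = (\<lambda>j. (X / d) * (1 / real d) ^ j)"
    by (auto simp: power_divide field_simps)
  show ?thesis unfolding e by (intro summable_mult summable_geometric q)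
qed

lemma Pn_Suc: "(P ^^ Suc n) w = P ((P ^^ n) w)" by simp
lemma Pn_Suc': "(P ^^ n) (P w) = (P ^^ Suc n) w" by (simp add: funpow_Suc_right del: funpow.simps)

lemma g_P: "g n (P w) = d * g (Suc n) w"
  unfolding g_def Pn_Suc' using d_pos by (simp add: field_simps)

lemma G_P: "G (P w) = d * G w"
proof -
  have "(\<lambda>n. g n (P w)) \<longlonglongrightarrow> d * G w"
    unfolding g_P by (intro tendsto_mult tendsto_const) (rule LIMSEQ_Suc[OF G_lim])
  then show ?thesis using G_lim LIMSEQ_unique by blast
qed

lemma G_iter: "G ((P ^^ n) w) = d ^ n * G w"
  by (induction n) (auto simp: G_P)

lemma G_nonneg: "0 \<le> G w"
  using G_lim g_nonneg by (metis LIMSEQ_le_const)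

lemma escape: "R \<le> norm u \<Longrightarrow> 2 ^ n * norm u \<le> norm ((P ^^ n) u)"
proof (induction n)
  case 0 then show ?case by simp
next
  case (Suc n)
  have "R \<le> 2 ^ n * norm u" using Suc.prems by (smt (verit) mult_le_cancel_right1 norm_ge_zero one_le_power)
  then have "R \<le> norm ((P ^^ n) u)" using Suc by linarith
  then have "2 * norm ((P ^^ n) u) \<le> norm ((P ^^ Suc n) u)" using R_props(3) by simp
  then show ?case using Suc by simp
qed

lemma unbounded_orbit:
  assumes "w \<notin> filled_julia p"
  shows "\<exists>n. T < norm ((P ^^ n) w)"
proof (rule ccontr)
  assume "\<not> ?thesis"
  then have "bounded (range (\<lambda>n. (P ^^ n) w))"
    unfolding bounded_iff by (auto intro!: exI[of _ T] simp: not_less)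
  with assms show False unfolding filled_julia_def by simp
qed

lemma K_small: "w \<in> filled_julia p \<Longrightarrow> norm ((P ^^ n) w) < R"
proof (rule ccontr)
  assume K: "w \<in> filled_julia p" and "\<not> norm ((P ^^ n) w) < R"
  then have u: "R \<le> norm ((P ^^ n) w)" by simp
  from K obtain B where B: "\<And>m. norm ((P ^^ m) w) \<le> B"
    unfolding filled_julia_def bounded_iff by auto
  obtain m :: nat where m: "B < m" using reals_Archimedean2 by blast
  have "real m < 2 ^ m" by (metis of_nat_less_two_power)
  then have "real m \<le> 2 ^ m * norm ((P ^^ n) w)"
    using u R_props(1) by (smt (verit) mult_le_cancel_left1 zero_le_power)
  also have "\<dots> \<le> norm ((P ^^ (m + n)) w)" using escape[OF u, of m] by (simp add: funpow_add)
  finally show False using B[of "m+n"] m by simp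
qed

lemma K_ball: "filled_julia p \<subseteq> ball 0 R"
  using K_small[of _ 0] by auto

lemma G_zero: assumes "w \<in> filled_julia p" shows "G w = 0"
proof -
  have "\<And>n. g n w = ln R * (1 / real d) ^ n"
    unfolding g_def using K_small[OF assms] by (simp add: power_divide)
  moreover have "(\<lambda>n. ln R * (1 / real d) ^ n) \<longlonglongrightarrow> 0"
    using d2 by (intro tendsto_mult_right_zero LIMSEQ_power_zero) auto
  ultimately show ?thesis using G_lim[of w] LIMSEQ_unique by auto
qed

lemma G_pos: assumes "w \<notin> filled_julia p" shows "0 < G w"
proof -
  obtain n where n: "max R (exp (C / (d - 1) + 1)) < norm ((P ^^ n) w)"
    using unbounded_orbit[OF assms] by blast
  define u where "u = (P ^^ n) w"
  have "R < norm u" using n u_def by simp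
  then have g0: "g 0 u = ln (norm u)" unfolding g_def by simp
  have e: "exp (C / (d - 1) + 1) < norm u" using n u_def by simp
  have "ln (exp (C / (d - 1) + 1)) < ln (norm u)"
    using e by (subst ln_less_cancel_iff) (auto intro: less_trans[OF exp_gt_zero])
  then have "C / (d - 1) + 1 < ln (norm u)" by simp
  moreover have "g 0 u - G u \<le> C / (d - 1)" using G_g0[of u] by (simp add: abs_le_iff)
  ultimately have "0 < G u" using g0 by (smt (verit))
  then show ?thesis using G_iter[of n w] u_def d_pos by (simp add: zero_less_mult_iff)
qed

lemma K_iff: "w \<in> filled_julia p \<longleftrightarrow> G w = 0"
  using G_zero G_pos by force

lemma Re_Ln_bound: "norm (y - 1) \<le> 1/2 \<Longrightarrow> norm (Ln y) \<le> ln 2 + pi"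
proof -
  assume h: "norm (y - 1) \<le> 1/2"
  have "1 \<le> norm y + norm (y - 1)" using norm_triangle_ineq4[of y "y - 1"] by simp
  then have y1: "1/2 \<le> norm y" using h by linarith
  have "norm y \<le> norm (y - 1) + 1" using norm_triangle_ineq[of "y - 1" 1] by simp
  then have y2: "norm y \<le> 3/2" using h by linarith
  have y0: "y \<noteq> 0" using y1 by auto
  have "\<bar>Re (Ln y)\<bar> \<le> ln 2" using abs_ln_le[OF y1 y2] Re_Ln[OF y0] by simp
  moreover have "\<bar>Im (Ln y)\<bar> \<le> pi" using Im_Ln_le_pi[OF y0] mpi_less_Im_Ln[OF y0] by linarith
  ultimately show ?thesis using cmod_le[of "Ln y"] by linarith
qed

end

context pd begin

lemma LH_G:
  assumes pos: "0 < G w0"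
  shows "\<exists>r>0. \<exists>H. H holomorphic_on ball w0 r \<and> (\<forall>w\<in>ball w0 r. G w = Re (H w))"
proof -
  have nK: "w0 \<notin> filled_julia p" using pos K_iff by auto
  obtain N where N: "R < norm ((P ^^ N) w0)" using unbounded_orbit[OF nK] by blast
  define u0 where "u0 = (P ^^ N) w0"
  have u00: "u0 \<noteq> 0" using N R_pos u0_def by auto
  define s where "s = cnj u0 / complex_of_real (norm u0)"
  have ns: "norm s = 1" using u00 unfolding s_def by (simp add: norm_divide)
  have su0: "s * u0 = complex_of_real (norm u0)"
    using u00 unfolding s_def by (simp add: field_simps complex_norm_square[symmetric] power2_eq_square)
  define Om where "Om = {w. R < norm ((P ^^ N) w) \<and> 0 < Re (s * (P ^^ N) w)}"
  have oOm: "open Om" unfolding Om_def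
    by (intro open_Collect_conj open_Collect_less continuous_intros continuous_on_compose2[OF Pn_cont[of UNIV N]]) auto
  have "Re (s * (P ^^ N) w0) = norm u0" using su0 u0_def by simp
  then have "0 < Re (s * (P ^^ N) w0)" using u00 by simp
  then have w0Om: "w0 \<in> Om" unfolding Om_def using N u0_def by blast
  define u where "u j w = (P ^^ (j + N)) w" for j w
  have uSuc: "u (Suc j) w = P (u j w)" for j w unfolding u_def by simp
  have uR: "R \<le> norm (u j w)" if "w \<in> Om" for j w
  proof (induction j)
    case 0 then show ?case using that unfolding Om_def u_def by simp
  next
    case (Suc j)
    then show ?case using R_props(3)[OF Suc] uSuc[of j w] R_pos by simp
  qed
  have u_nz: "u j w \<noteq> 0" if "w \<in> Om" for j w using uR[OF that, of j] R_pos by auto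
  define y where "y j w = P (u j w) / (a * u j w ^ d)" for j w
  have y1: "norm (y j w - 1) \<le> 1/2" if "w \<in> Om" for j w
    unfolding y_def using R_props(2)[OF uR[OF that]] .
  have yRe: "0 < Re (y j w)" if "w \<in> Om" for j w
  proof -
    have "Re (1 - y j w) \<le> norm (1 - y j w)" by (rule complex_Re_le_cmod)
    also have "\<dots> \<le> 1/2" using y1[OF that] by (simp add: norm_minus_commute)
    finally have h: "Re (1 - y j w) \<le> 1/2" .
    have "Re (1 - y j w) = 1 - Re (y j w)" by simp
    with h show ?thesis by linarith
  qed
  have y_nz: "y j w \<noteq> 0" if "w \<in> Om" for j w using yRe[OF that, of j] by auto
  have y_npR: "y j w \<notin> \<real>\<^sub>\<le>\<^sub>0" if "w \<in> Om" for j w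
    using yRe[OF that, of j] complex_nonpos_Reals_iff by auto
  define cc where "cc j w = (Ln (y j w) + complex_of_real (ln (norm a))) / complex_of_real (real d ^ Suc j)" for j w
  define Bd where "Bd = ln 2 + pi + \<bar>ln (norm a)\<bar>"
  have ccb: "norm (cc j w) \<le> Bd / real d ^ Suc j" if "w \<in> Om" for j w
  proof -
    have "norm (Ln (y j w) + complex_of_real (ln (norm a))) \<le> norm (Ln (y j w)) + \<bar>ln (norm a)\<bar>"
      using norm_triangle_ineq[of "Ln (y j w)" "complex_of_real (ln (norm a))"] by simp
    also have "\<dots> \<le> Bd" unfolding Bd_def using Re_Ln_bound[OF y1[OF that]] by simp
    finally have h: "norm (Ln (y j w) + complex_of_real (ln (norm a))) \<le> Bd" .
    have nd: "norm (complex_of_real (real d ^ Suc j)) = real d ^ Suc j"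
      by (subst norm_of_real) simp
    show ?thesis unfolding cc_def norm_divide nd using h d_pos by (intro divide_right_mono) auto
  qed
  have u_holo: "u j holomorphic_on Om" for j
    unfolding u_def[abs_def] by (rule Pn_holo)
  have y_holo: "y j holomorphic_on Om" for j
    unfolding y_def[abs_def] using a_nz u_nz
    by (intro holomorphic_intros holomorphic_on_compose_gen[OF u_holo P_holo, unfolded comp_def] u_holo) auto
  have cc_holo: "cc j holomorphic_on Om" for j
    unfolding cc_def[abs_def] using d_pos
    by (intro holomorphic_intros holomorphic_on_Ln'[OF _ y_holo]) (auto simp: y_npR)
  have unif: "uniform_limit Om (\<lambda>n w. \<Sum>j<n. cc j w) (\<lambda>w. \<Sum>j. cc j w) sequentially"
    by (rule Weierstrass_m_test[OF _ geo_X[of Bd]]) (use ccb in auto)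
  have S_holo: "(\<lambda>w. \<Sum>j. cc j w) holomorphic_on Om"
  proof (rule holomorphic_uniform_sequence[OF oOm])
    show "(\<lambda>w. \<Sum>j<n. cc j w) holomorphic_on Om" for n
      by (intro holomorphic_intros cc_holo)
    fix x assume "x \<in> Om"
    then obtain e where e: "e > 0" "cball x e \<subseteq> Om" using oOm open_contains_cball by blast
    then show "\<exists>e>0. cball x e \<subseteq> Om \<and> uniform_limit (cball x e) (\<lambda>n w. \<Sum>j<n. cc j w) (\<lambda>w. \<Sum>j. cc j w) sequentially"
      using uniform_limit_on_subset[OF unif e(2)] by blast
  qed
  define H where "H w = (Ln (s * u 0 w) + (\<Sum>j. cc j w)) / complex_of_real (real d ^ N)" for w
  have su_npR: "s * u 0 w \<notin> \<real>\<^sub>\<le>\<^sub>0" if "w \<in> Om" for w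
    using that unfolding Om_def u_def by (auto simp: complex_nonpos_Reals_iff)
  have H_holo: "H holomorphic_on Om"
    unfolding H_def[abs_def] using d_pos
    by (intro holomorphic_intros S_holo holomorphic_on_Ln'[OF su_npR]) (auto intro: u_holo)
  have H_Re: "G w = Re (H w)" if wOm: "w \<in> Om" for w
  proof -
    have Recc: "Re (cc j w) = ln (norm (u (Suc j) w)) / real d ^ Suc j - ln (norm (u j w)) / real d ^ j" for j
    proof -
      have "Re (cc j w) = (ln (norm (y j w)) + ln (norm a)) / real d ^ Suc j"
        unfolding cc_def using y_nz[OF wOm] by (simp add: Re_divide_of_real Re_Ln)
      also have "ln (norm (y j w)) + ln (norm a) = ln (norm (u (Suc j) w)) - d * ln (norm (u j w))"
        using ln_ratio[OF uR[OF wOm]] unfolding y_def uSuc by simp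
      finally show ?thesis using d_pos by (simp add: field_simps)
    qed
    have part: "Re (\<Sum>j<n. cc j w) = ln (norm (u n w)) / real d ^ n - ln (norm (u 0 w))" for n
      unfolding Re_sum Recc using sum_lessThan_telescope[of "\<lambda>j. ln (norm (u j w)) / real d ^ j" n] by simp
    have gN: "ln (norm (u n w)) / real d ^ n = real d ^ N * g (n + N) w" for n
    proof -
      have "max (norm (u n w)) R = norm (u n w)" using uR[OF wOm, of n] by (simp add: max_def)
      then show ?thesis unfolding g_def u_def[symmetric] using d_pos by (simp add: power_add field_simps)
    qed
    have L1: "(\<lambda>n. Re (\<Sum>j<n. cc j w)) \<longlonglongrightarrow> real d ^ N * G w - ln (norm (u 0 w))"
      unfolding part gN by (intro tendsto_diff tendsto_mult tendsto_const LIMSEQ_ignore_initial_segment G_lim)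
    have "summable (\<lambda>j. cc j w)"
      by (rule summable_comparison_test[OF _ geo_X[of Bd]]) (use ccb[OF wOm] in auto)
    then have L2: "(\<lambda>n. Re (\<Sum>j<n. cc j w)) \<longlonglongrightarrow> Re (\<Sum>j. cc j w)"
      by (intro tendsto_Re summable_LIMSEQ)
    have eqS: "Re (\<Sum>j. cc j w) = real d ^ N * G w - ln (norm (u 0 w))"
      using LIMSEQ_unique[OF L2 L1] .
    have "s * u 0 w \<noteq> 0" using u_nz[OF wOm, of 0] ns by auto
    then have "Re (Ln (s * u 0 w)) = ln (norm (u 0 w))"
      using ns by (simp add: Re_Ln norm_mult)
    then show ?thesis unfolding H_def using eqS d_pos by (simp add: Re_divide_of_real)
  qed
  obtain r where r: "r > 0" "ball w0 r \<subseteq> Om" using oOm w0Om open_contains_ball by blast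
  show ?thesis
    using r H_Re by (intro exI[of _ r] exI[of _ H] conjI holomorphic_on_subset[OF H_holo]) auto
qed

end

lemma re_zero_const:
  fixes f :: "complex \<Rightarrow> complex"
  assumes hol: "f holomorphic_on ball x e" and e: "e > 0" and re: "\<And>y. y \<in> ball x e \<Longrightarrow> Re (f y) = 0"
  shows "\<And>y. y \<in> ball x e \<Longrightarrow> f y = f x"
proof -
  have "f constant_on ball x e"
  proof (rule ccontr)
    assume nc: "\<not> f constant_on ball x e"
    have "open (f ` ball x e)"
      by (rule open_mapping_thm[OF hol open_ball connected_ball open_ball subset_refl nc])
    moreover have "f x \<in> f ` ball x e" using e by auto
    ultimately obtain \<epsilon> where \<epsilon>: "\<epsilon> > 0" "ball (f x) \<epsilon> \<subseteq> f ` ball x e"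
      using open_contains_ball by blast
    have "f x + complex_of_real (\<epsilon>/2) \<in> ball (f x) \<epsilon>" using \<epsilon> by (simp add: dist_norm)
    then have "f x + complex_of_real (\<epsilon>/2) \<in> f ` ball x e" using \<epsilon>(2) by (rule subsetD[rotated])
    then obtain y where y: "y \<in> ball x e" "f y = f x + complex_of_real (\<epsilon>/2)"
      by (metis imageE)
    have "Re (f y) = \<epsilon>/2" using y re[of x] e by simp
    with re[OF y(1)] \<epsilon> show False by simp
  qed
  then obtain c where "\<And>y. y \<in> ball x e \<Longrightarrow> f y = c" unfolding constant_on_def by blast
  moreover have "x \<in> ball x e" using e by simp
  ultimately show "\<And>y. y \<in> ball x e \<Longrightarrow> f y = f x" by metis
qed

lemma re_eq_extend:
  fixes h g :: "complex \<Rightarrow> complex"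
  assumes S: "open S" "connected S" and hh: "h holomorphic_on S" and gh: "g holomorphic_on S"
    and U: "U \<subseteq> S" "open U" "x \<in> U" and eq: "\<And>y. y \<in> U \<Longrightarrow> Re (h y) = Re (g y)"
  shows "\<And>y. y \<in> S \<Longrightarrow> Re (h y) = Re (g y)"
proof -
  obtain e where e: "e > 0" "ball x e \<subseteq> U" using U open_contains_ball by blast
  define f where "f y = h y - g y" for y
  have fh: "f holomorphic_on S" unfolding f_def[abs_def] by (intro holomorphic_intros hh gh)
  have fb: "f holomorphic_on ball x e" using fh e U by (blast intro: holomorphic_on_subset)
  have reb: "Re (f y) = 0" if "y \<in> ball x e" for y
    using eq[of y] that e(2) by (auto simp: f_def)
  have fx: "f y = f x" if "y \<in> ball x e" for y
    using re_zero_const[OF fb e(1) reb that] .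
  have cont: "f w - f x = 0" if w: "w \<in> S" for w
  proof (rule analytic_continuation[of "\<lambda>w. f w - f x" S "ball x e" x])
    show "(\<lambda>w. f w - f x) holomorphic_on S" by (rule holomorphic_on_diff[OF fh holomorphic_on_const])
    show "ball x e \<subseteq> S" using e U by blast
    show "x \<in> S" using U by blast
    show "x islimpt ball x e" using e by (simp add: islimpt_ball)
    show "\<And>z. z \<in> ball x e \<Longrightarrow> f z - f x = 0" using fx by simp
  qed (use S w in auto)
  have "Re (f x) = 0" using eq[OF U(3)] by (simp add: f_def)
  moreover fix y assume "y \<in> S"
  then have "f y = f x" using cont by simp
  then have "Re (h y - g y) = Re (h x - g x)" unfolding f_def by (rule arg_cong)
  then have "Re (h y) - Re (g y) = Re (h x) - Re (g x)" by simp
  ultimately show "Re (h y) = Re (g y)" by (simp add: f_def)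
qed

lemma continuation:
  fixes V :: "complex \<Rightarrow> real" and E :: "complex \<Rightarrow> complex"
  assumes S: "open S" "connected S" and Eh: "E holomorphic_on S" and Epos: "\<And>z. z \<in> S \<Longrightarrow> Re (E z) > 0"
    and Vc: "continuous_on UNIV V"
    and LH: "\<And>z. V z > 0 \<Longrightarrow> \<exists>r>0. \<exists>h. h holomorphic_on ball z r \<and> (\<forall>w\<in>ball z r. V w = Re (h w))"
    and U: "U \<subseteq> S" "open U" "x0 \<in> U" and eqU: "\<And>y. y \<in> U \<Longrightarrow> V y = Re (E y)"
  shows "\<And>z. z \<in> S \<Longrightarrow> V z = Re (E z)"
proof -
  define A where "A = {z\<in>S. \<exists>e>0. \<forall>y\<in>ball z e. V y = Re (E y)}"
  have AS: "A \<subseteq> S" unfolding A_def by auto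
  have oA: "open A" unfolding open_contains_ball
  proof
    fix z assume "z \<in> A"
    then obtain e where e: "z \<in> S" "e > 0" "\<forall>y\<in>ball z e. V y = Re (E y)" unfolding A_def by auto
    obtain e2 where e2: "e2 > 0" "ball z e2 \<subseteq> S" using S e open_contains_ball by blast
    define e1 where "e1 = min e e2"
    have "ball z e1 \<subseteq> A"
    proof
      fix y assume y: "y \<in> ball z e1"
      have "ball y (e1 - dist z y) \<subseteq> ball z e1"
      proof
        fix t assume "t \<in> ball y (e1 - dist z y)"
        then have "dist y t < e1 - dist z y" by simp
        moreover have "dist z t \<le> dist z y + dist y t" by (rule dist_triangle)
        ultimately show "t \<in> ball z e1" by simp
      qed
      moreover have "ball z e1 \<subseteq> ball z e" "ball z e1 \<subseteq> S" using e2 unfolding e1_def by auto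
      ultimately show "y \<in> A" unfolding A_def using y e
        by (intro CollectI conjI exI[of _ "e1 - dist z y"]) (auto simp: dist_commute)
    qed
    moreover have "e1 > 0" using e e2 by (simp add: e1_def)
    ultimately show "\<exists>e>0. ball z e \<subseteq> A" by blast
  qed
  have Econt: "continuous_on S E" using Eh holomorphic_on_imp_continuous_on by blast
  have cA: "closedin (top_of_set S) A" unfolding closedin_limpt
  proof (intro conjI AS allI impI)
    fix z assume z: "z islimpt A \<and> z \<in> S"
    then obtain f where f: "\<And>n. f n \<in> A - {z}" "f \<longlonglongrightarrow> z" using islimpt_sequential by blast
    have "V (f n) = Re (E (f n))" for n
    proof -
      obtain e where "e > 0" "\<forall>y\<in>ball (f n) e. V y = Re (E y)" using f(1)[of n] unfolding A_def by blast
      then show ?thesis by simp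
    qed
    moreover have "isCont V z" using Vc continuous_on_eq_continuous_at open_UNIV by blast
    then have "(\<lambda>n. V (f n)) \<longlonglongrightarrow> V z"
      using f(2) by (intro isCont_tendsto_compose[of z V])
    moreover have "isCont E z" using Econt S z continuous_on_eq_continuous_at by blast
    then have "(\<lambda>n. Re (E (f n))) \<longlonglongrightarrow> Re (E z)"
      using f(2) by (intro tendsto_Re isCont_tendsto_compose[of z E])
    ultimately have Vz: "V z = Re (E z)" using LIMSEQ_unique by force
    then have "V z > 0" using Epos z by simp
    then obtain r h where r: "r > 0" "h holomorphic_on ball z r" "\<And>w. w \<in> ball z r \<Longrightarrow> V w = Re (h w)"
      using LH by blast
    obtain r2 where r2: "r2 > 0" "ball z r2 \<subseteq> S" using S z open_contains_ball by blast
    define r1 where "r1 = min r r2"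
    have r1: "r1 > 0" "ball z r1 \<subseteq> ball z r" "ball z r1 \<subseteq> S" using r r2 unfolding r1_def by auto
    obtain y where y: "y \<in> A" "y \<noteq> z" "dist y z < r1" using z r1 islimpt_approachable by blast
    obtain ey where ey: "ey > 0" "\<forall>w\<in>ball y ey. V w = Re (E w)" using y unfolding A_def by auto
    have "\<And>w. w \<in> ball z r1 \<Longrightarrow> Re (h w) = Re (E w)"
    proof (rule re_eq_extend[of "ball z r1" h E "ball y ey \<inter> ball z r1" y])
      show "h holomorphic_on ball z r1" using r1 r by (blast intro: holomorphic_on_subset)
      show "E holomorphic_on ball z r1" using r1 Eh by (blast intro: holomorphic_on_subset)
      show "y \<in> ball y ey \<inter> ball z r1" using ey y by (simp add: dist_commute)
      fix w assume w: "w \<in> ball y ey \<inter> ball z r1"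
      then have "w \<in> ball z r" using r1(2) by blast
      then have "V w = Re (h w)" using r(3) by blast
      moreover have "V w = Re (E w)" using ey(2) w by blast
      ultimately show "Re (h w) = Re (E w)" by simp
    qed auto
    then have "\<forall>w\<in>ball z r1. V w = Re (E w)" using r(3) r1 by auto
    then show "z \<in> A" unfolding A_def using z r1 by auto
  qed
  have "x0 \<in> A"
  proof -
    obtain e where "e > 0" "ball x0 e \<subseteq> U" using U open_contains_ball by blast
    then show ?thesis unfolding A_def using U eqU by auto
  qed
  moreover have "openin (top_of_set S) A" using oA AS by (simp add: openin_open_eq S)
  ultimately have "A = S" using cA S(2) unfolding connected_clopen by blast
  fix z assume "z \<in> S"
  then have "z \<in> A" using \<open>A = S\<close> by simp
  then obtain e where "e > 0" "\<forall>y\<in>ball z e. V y = Re (E y)" unfolding A_def by blast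
  then show "V z = Re (E z)" by simp
qed

locale cor = pd +
  fixes lam \<beta> :: real and \<Phi> :: "complex \<Rightarrow> complex" and c k :: complex
  assumes lam1: "lam > 1" and beta: "\<beta> > 0"
  and Phi_entire: "\<Phi> holomorphic_on UNIV"
  and Phi_fe: "\<And>z. \<Phi> (complex_of_real lam * z) = cpoly p (\<Phi> z)"
  and Phi0: "\<Phi> 0 = 0" and Phi'0: "deriv \<Phi> 0 = 1"
  and cc: "c ^ (d - 1) = 1 / complex_of_real (lead_coeff p)"
  and asymk: "\<And>\<epsilon> M \<eta>. \<epsilon> > 0 \<Longrightarrow> M > 0 \<Longrightarrow> \<eta> > 0 \<Longrightarrow>
       \<exists>R. \<forall>z. norm z > R \<and> z \<noteq> 0 \<and> \<bar>Arg z\<bar> \<le> \<beta> - \<epsilon> \<longrightarrow>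
         (\<exists>e. \<Phi> z = c * exp (z powr complex_of_real (ln (real d) / ln lam) * k + e)
              \<and> norm e \<le> \<eta> * norm z powr (- M))"
  and J: "julia p \<subseteq> complex_of_real ` {..0}"
  and unb: "\<not> bounded (\<Phi> ` (complex_of_real ` {x. x < 0}))"
begin

definition rho :: real where "rho = ln (real d) / ln lam"

lemma lnlam: "ln lam > 0" using lam1 by simp
lemma rho_pos: "rho > 0" unfolding rho_def using d2 lnlam by simp
lemma rho_lam: "rho * ln lam = ln (real d)" unfolding rho_def using lnlam by simp

lemma c_nz: "c \<noteq> 0"
proof
  assume c0: "c = 0"
  have z: "(0::complex) ^ (d - 1) = 0" using d2 by (intro zero_power) simp
  have "0 = 1 / complex_of_real (lead_coeff p)" using cc unfolding c0 z .
  moreover have "lead_coeff p \<noteq> 0" using p_nz by simp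
  ultimately show False by simp
qed

lemma K_real:
  assumes wK: "w \<in> filled_julia p" shows "Im w = 0"
proof (rule ccontr)
  assume nz: "Im w \<noteq> 0"
  define f where "f t = w + complex_of_real t * (\<i> * complex_of_real (Im w))" for t
  define S where "S = f ` {0..}"
  have fc: "continuous_on {0..} f" unfolding f_def by (intro continuous_intros)
  have "connected S" unfolding S_def by (rule connected_continuous_image[OF fc connected_Ici])
  moreover have "S \<inter> filled_julia p \<noteq> {}"
    using wK unfolding S_def f_def by (auto intro!: image_eqI[of _ _ 0])
  moreover have "S - filled_julia p \<noteq> {}"
  proof -
    define t0 where "t0 = (R + norm w) / \<bar>Im w\<bar>"
    have t0: "t0 \<ge> 0" unfolding t0_def using R_pos by simp
    have "norm (f t0 - w) = t0 * \<bar>Im w\<bar>" unfolding f_def using t0 by (simp add: norm_mult)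
    also have "\<dots> = R + norm w" unfolding t0_def using nz by simp
    finally have "R \<le> norm (f t0)" using norm_triangle_ineq4[of "f t0" w] by simp
    then have "f t0 \<notin> filled_julia p" using K_ball by auto
    then show ?thesis unfolding S_def using t0 by auto
  qed
  ultimately have "S \<inter> frontier (filled_julia p) \<noteq> {}" by (rule connected_Int_frontier)
  then obtain t where t: "t \<ge> 0" "f t \<in> julia p" unfolding S_def julia_def by auto
  then have "Im (f t) = 0" using J by auto
  moreover have "Im (f t) = (1 + t) * Im w" unfolding f_def by (simp add: algebra_simps)
  ultimately show False using t nz by simp
qed

definition Psi :: "complex \<Rightarrow> complex" where "Psi w = \<Phi> (exp w)"
definition V :: "complex \<Rightarrow> real" where "V w = G (Psi w)"

lemma Psi_holo: "Psi holomorphic_on UNIV"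
proof -
  have "\<Phi> \<circ> exp holomorphic_on UNIV"
  proof (rule holomorphic_on_compose_gen[OF _ Phi_entire])
    have "(\<lambda>w. exp w) holomorphic_on UNIV" by (intro holomorphic_intros)
    then show "exp holomorphic_on UNIV" by simp
  qed auto
  then show ?thesis unfolding Psi_def[abs_def] by (simp add: comp_def)
qed

lemma Psi_cont: "continuous_on UNIV Psi"
  using Psi_holo holomorphic_on_imp_continuous_on by blast

lemma V_cont: "continuous_on UNIV V"
  unfolding V_def[abs_def] by (rule continuous_on_compose2[OF G_cont Psi_cont]) auto

lemma V_nonneg: "V w \<ge> 0" unfolding V_def using G_nonneg .

lemma V_zero_real: "V w = 0 \<Longrightarrow> Im (Psi w) = 0"
  unfolding V_def using K_iff K_real by blast

lemma V_LH:
  assumes "V w0 > 0"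
  shows "\<exists>r>0. \<exists>h. h holomorphic_on ball w0 r \<and> (\<forall>w\<in>ball w0 r. V w = Re (h w))"
proof -
  obtain r H where rH: "r > 0" "H holomorphic_on ball (Psi w0) r" "\<forall>w\<in>ball (Psi w0) r. G w = Re (H w)"
    using LH_G[of "Psi w0"] assms unfolding V_def by blast
  have "open (Psi -` ball (Psi w0) r)" by (rule open_vimage[OF open_ball Psi_cont])
  moreover have "w0 \<in> Psi -` ball (Psi w0) r" using rH by simp
  ultimately obtain r2 where r2: "r2 > 0" "ball w0 r2 \<subseteq> Psi -` ball (Psi w0) r"
    using open_contains_ball by blast
  have "H \<circ> Psi holomorphic_on ball w0 r2"
    by (rule holomorphic_on_compose_gen[OF holomorphic_on_subset[OF Psi_holo] rH(2)]) (use r2 in auto)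
  moreover have "\<forall>w\<in>ball w0 r2. V w = Re ((H \<circ> Psi) w)" using r2 rH unfolding V_def by auto
  ultimately show ?thesis using r2 by blast
qed

definition Ef :: "complex \<Rightarrow> complex" where "Ef w = exp (complex_of_real rho * w) * k"
definition q :: "real \<Rightarrow> real" where "q t = Re (exp (\<i> * complex_of_real (rho * t)) * k)"

lemma Ef_holo: "Ef holomorphic_on S" unfolding Ef_def[abs_def] by (intro holomorphic_intros)

lemma q_formula: "q t = Re k * cos (rho * t) - Im k * sin (rho * t)"
  unfolding q_def cis_conv_exp[symmetric] by simp

lemma q_cont: "continuous_on UNIV q"
  unfolding q_formula[abs_def] by (intro continuous_intros)

lemma ReEf: "Re (Ef w) = exp (rho * Re w) * q (Im w)"
proof -
  have eqw: "complex_of_real rho * w = complex_of_real (rho * Re w) + \<i> * complex_of_real (rho * Im w)"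
    by (simp add: complex_eq_iff)
  have "Ef w = exp (complex_of_real (rho * Re w)) * (exp (\<i> * complex_of_real (rho * Im w)) * k)"
    unfolding Ef_def by (subst eqw, simp only: exp_add mult.assoc)
  then have "Ef w = complex_of_real (exp (rho * Re w)) * (exp (\<i> * complex_of_real (rho * Im w)) * k)"
    by (simp only: exp_of_real)
  then show ?thesis unfolding q_def by simp
qed

lemma NR:
  assumes U: "open U" "w1 \<in> U" and re: "\<And>w. w \<in> U \<Longrightarrow> Im (Psi w) = 0"
  shows False
proof (cases "Psi constant_on UNIV")
  case False
  have "open (Psi ` U)" by (rule open_mapping_thm[OF Psi_holo open_UNIV connected_UNIV U(1) subset_UNIV False])
  moreover have "Psi w1 \<in> Psi ` U" using U by auto
  ultimately obtain \<epsilon> where \<epsilon>: "\<epsilon> > 0" "ball (Psi w1) \<epsilon> \<subseteq> Psi ` U"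
    using open_contains_ball by blast
  have "Psi w1 + \<i> * complex_of_real (\<epsilon>/2) \<in> ball (Psi w1) \<epsilon>" using \<epsilon> by (simp add: dist_norm norm_mult)
  then have "Psi w1 + \<i> * complex_of_real (\<epsilon>/2) \<in> Psi ` U" using \<epsilon>(2) by (rule subsetD[rotated])
  then obtain y where y: "y \<in> U" "Psi y = Psi w1 + \<i> * complex_of_real (\<epsilon>/2)" by (metis imageE)
  have "Im (Psi y) = \<epsilon>/2" using y re[OF U(2)] by simp
  with re[OF y(1)] \<epsilon> show False by simp
next
  case True
  then obtain c0 where c0: "\<And>w. Psi w = c0" unfolding constant_on_def by blast
  have nz: "\<Phi> z = c0" if "z \<noteq> 0" for z using c0[of "Ln z"] that unfolding Psi_def by (simp add: exp_Ln)
  have "isCont \<Phi> 0" using Phi_entire holomorphic_on_imp_continuous_on continuous_on_eq_continuous_at open_UNIV by blast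
  then have l1: "(\<Phi> \<longlongrightarrow> \<Phi> 0) (at 0)" by (simp add: isCont_def)
  have l2: "(\<Phi> \<longlongrightarrow> c0) (at 0)"
    by (rule Lim_transform_eventually[OF tendsto_const]) (auto simp: eventually_at_filter nz)
  have "\<Phi> 0 = c0" using tendsto_unique[OF _ l1 l2] by simp
  then have "\<Phi> z = c0" for z using nz by (cases "z = 0") auto
  then have "\<Phi> = (\<lambda>_. c0)" by (auto simp: fun_eq_iff)
  then have "deriv \<Phi> 0 = 0" by (simp add: deriv_const)
  with Phi'0 show False by simp
qed

lemma RAY:
  assumes re: "\<And>r. r > 0 \<Longrightarrow> Im (\<Phi> (complex_of_real r * cis \<theta>)) = 0"
  shows "sin \<theta> = 0"
proof -
  have "\<Phi> field_differentiable at 0"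
    using holomorphic_on_imp_differentiable_at[OF Phi_entire open_UNIV] by simp
  then have "(\<Phi> has_field_derivative 1) (at 0)"
    using Phi'0 DERIV_deriv_iff_field_differentiable by metis
  then have D: "((\<lambda>y. \<Phi> y / y) \<longlongrightarrow> 1) (at 0)"
    unfolding has_field_derivative_iff using Phi0 by simp
  define f where "f r = complex_of_real r * cis \<theta>" for r
  have "filterlim f (at 0) (at_right 0)"
    unfolding filterlim_at f_def
  proof
    show "\<forall>\<^sub>F x in at_right 0. complex_of_real x * cis \<theta> \<in> UNIV \<and> complex_of_real x * cis \<theta> \<noteq> 0"
      using eventually_at_right_less[of 0] by (rule eventually_mono) auto
    have "((\<lambda>x. complex_of_real x * cis \<theta>) \<longlongrightarrow> complex_of_real 0 * cis \<theta>) (at_right 0)"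
      by (intro tendsto_intros)
    then show "((\<lambda>x. complex_of_real x * cis \<theta>) \<longlongrightarrow> 0) (at_right 0)" by simp
  qed
  from filterlim_compose[OF D this]
  have "((\<lambda>r. \<Phi> (f r) / f r) \<longlongrightarrow> 1) (at_right 0)" by simp
  then have "((\<lambda>r. \<Phi> (f r) / f r * cis \<theta>) \<longlongrightarrow> 1 * cis \<theta>) (at_right 0)"
    by (intro tendsto_mult tendsto_const)
  then have "((\<lambda>r. Im (\<Phi> (f r) / f r * cis \<theta>)) \<longlongrightarrow> Im (cis \<theta>)) (at_right 0)"
    by (intro tendsto_Im) simp
  moreover have "\<forall>\<^sub>F r in at_right 0. Im (\<Phi> (f r) / f r * cis \<theta>) = 0"
  proof (rule eventually_at_right_less[THEN eventually_mono])
    fix r :: real assume r: "0 < r"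
    have cz: "cis \<theta> \<noteq> 0" by (metis cis_neq_zero)
    have "\<Phi> (f r) / f r * cis \<theta> = \<Phi> (f r) / complex_of_real r"
      unfolding f_def using cz r by (simp add: field_simps)
    then show "Im (\<Phi> (f r) / f r * cis \<theta>) = 0" using re[OF r] unfolding f_def by (simp add: Im_divide_of_real)
  qed
  ultimately have "((\<lambda>r. 0) \<longlongrightarrow> Im (cis \<theta>)) (at_right (0::real))"
    by (rule Lim_transform_eventually)
  from tendsto_unique[OF _ this tendsto_const] have "Im (cis \<theta>) = 0" by simp
  then show ?thesis by simp
qed

end

context cor begin

lemma ln_max: "0 < (x::real) \<Longrightarrow> 0 < y \<Longrightarrow> ln (max x y) = max (ln x) (ln y)"
  by (auto simp: max_def)

lemma max_diff: "\<bar>max L lR - max X (0::real)\<bar> \<le> \<bar>L - X\<bar> + \<bar>lR\<bar>"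
  by (auto simp: max_def abs_if)

lemma sector:
  assumes wb: "\<bar>Im w\<bar> < min \<beta> pi"
  shows "V w = max 0 (Re (Ef w))"
proof -
  have wpi: "\<bar>Im w\<bar> < pi" "\<bar>Im w\<bar> < \<beta>" using wb by auto
  define z where "z n = exp (w + complex_of_real (real n * ln lam))" for n
  have lam0: "lam > 0" using lam1 by simp
  have zrec: "z (Suc n) = complex_of_real lam * z n" for n
  proof -
    have "w + complex_of_real (real (Suc n) * ln lam) = (w + complex_of_real (real n * ln lam)) + complex_of_real (ln lam)"
      by (simp add: algebra_simps)
    then have "z (Suc n) = z n * exp (complex_of_real (ln lam))" unfolding z_def by (simp add: exp_add)
    also have "exp (complex_of_real (ln lam)) = complex_of_real lam" using lam0 by (simp add: exp_of_real)
    finally show ?thesis by simp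
  qed
  have Phiz: "\<Phi> (z n) = (P ^^ n) (\<Phi> (exp w))" for n
  proof (induction n)
    case 0 then show ?case unfolding z_def by simp
  next
    case (Suc n) then show ?case using zrec Phi_fe by simp
  qed
  have Gz: "G (\<Phi> (z n)) = real d ^ n * V w" for n
    unfolding Phiz V_def Psi_def using G_iter by simp
  have Imz: "Im (w + complex_of_real (real n * ln lam)) = Im w" for n by simp
  have Argz: "Arg (z n) = Im w" for n
    unfolding z_def using wpi by (subst Arg_exp) auto
  have Lnz: "Ln (z n) = w + complex_of_real (real n * ln lam)" for n
    unfolding z_def using wpi by (subst Ln_exp) auto
  have normz: "norm (z n) = exp (Re w) * lam ^ n" for n
  proof -
    have "norm (z n) = exp (Re w + real n * ln lam)" unfolding z_def by (simp add: norm_exp_eq_Re)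
    also have "\<dots> = exp (Re w) * exp (ln lam) ^ n" by (simp add: exp_add exp_of_nat_mult)
    finally show ?thesis using lam0 by simp
  qed
  have z_nz: "z n \<noteq> 0" for n unfolding z_def by simp
  have powrz: "z n powr complex_of_real (ln (real d) / ln lam) * k = complex_of_real (real d ^ n) * Ef w" for n
  proof -
    have "z n powr complex_of_real (ln (real d) / ln lam) = exp (complex_of_real rho * (w + complex_of_real (real n * ln lam)))"
      unfolding powr_def Lnz rho_def using z_nz by simp
    also have "complex_of_real rho * (w + complex_of_real (real n * ln lam)) = complex_of_real rho * w + complex_of_real (real n * ln (real d))"
      using rho_lam by (simp add: algebra_simps flip: of_real_mult)
    also have "exp (complex_of_real rho * w + complex_of_real (real n * ln (real d))) = exp (complex_of_real rho * w) * complex_of_real (real d ^ n)"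
      using d_pos by (simp add: exp_add exp_of_real exp_of_nat_mult)
    finally show ?thesis unfolding Ef_def by (simp add: algebra_simps)
  qed
  obtain R0 where R0: "\<And>z. norm z > R0 \<and> z \<noteq> 0 \<and> \<bar>Arg z\<bar> \<le> \<beta> - (\<beta> - \<bar>Im w\<bar>) \<Longrightarrow>
         (\<exists>e. \<Phi> z = c * exp (z powr complex_of_real (ln (real d) / ln lam) * k + e) \<and> norm e \<le> 1 * norm z powr (- 1))"
    using asymk[of "\<beta> - \<bar>Im w\<bar>" 1 1] wpi by auto
  obtain n0 where n0: "max R0 1 / exp (Re w) < lam ^ n0" using real_arch_pow[OF lam1] by blast
  have big: "max R0 1 < norm (z n)" if "n \<ge> n0" for n
  proof -
    have "lam ^ n0 \<le> lam ^ n" using that lam1 by (intro power_increasing) auto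
    then have "max R0 1 / exp (Re w) < lam ^ n" using n0 by linarith
    then show ?thesis unfolding normz by (simp add: divide_less_eq mult.commute)
  qed
  define Kc where "Kc = C / (d - 1) + \<bar>ln (norm c)\<bar> + 1 + \<bar>ln R\<bar>"
  have est: "\<bar>V w - max (Re (Ef w)) 0\<bar> \<le> Kc / real d ^ n" if "n \<ge> n0" for n
  proof -
    have zb: "max R0 1 < norm (z n)" using big[OF that] .
    obtain e where e: "\<Phi> (z n) = c * exp (complex_of_real (real d ^ n) * Ef w + e)" "norm e \<le> norm (z n) powr (- 1)"
      using R0[of "z n"] zb Argz powrz z_nz by auto
    have "norm (z n) powr (-1) \<le> 1" using zb by (auto simp: powr_minus inverse_le_1_iff)
    then have e1: "\<bar>Re e\<bar> \<le> 1" using e(2) abs_Re_le_cmod order_trans by blast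
    define A where "A = Re (Ef w)"
    have nPhi: "norm (\<Phi> (z n)) = norm c * exp (real d ^ n * A + Re e)"
      unfolding e(1) A_def by (simp add: norm_mult norm_exp_eq_Re)
    have Phi_nz: "norm (\<Phi> (z n)) > 0" unfolding nPhi using c_nz by simp
    have lnPhi: "ln (norm (\<Phi> (z n))) = ln (norm c) + (real d ^ n * A + Re e)"
      unfolding nPhi using c_nz by (simp add: ln_mult)
    have g0: "g 0 (\<Phi> (z n)) = max (ln (norm (\<Phi> (z n)))) (ln R)"
      unfolding g_def using ln_max[OF Phi_nz R_pos] by simp
    have "\<bar>G (\<Phi> (z n)) - g 0 (\<Phi> (z n))\<bar> \<le> C / (d - 1)" by (rule G_g0)
    moreover have "\<bar>max (ln (norm (\<Phi> (z n)))) (ln R) - max (real d ^ n * A) 0\<bar> \<le> \<bar>ln (norm c)\<bar> + 1 + \<bar>ln R\<bar>"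
    proof -
      have "\<bar>ln (norm (\<Phi> (z n))) - real d ^ n * A\<bar> \<le> \<bar>ln (norm c)\<bar> + 1"
        unfolding lnPhi using e1 by linarith
      then show ?thesis using max_diff[of "ln (norm (\<Phi> (z n)))" "ln R" "real d ^ n * A"] by linarith
    qed
    ultimately have "\<bar>real d ^ n * V w - max (real d ^ n * A) 0\<bar> \<le> Kc"
      unfolding Gz g0 Kc_def by (smt (verit))
    moreover have "max (real d ^ n * A) 0 = real d ^ n * max A 0"
    proof (cases "A \<le> 0")
      case True
      have dp: "real d ^ n > 0" using d_pos by simp
      then have "real d ^ n * A \<le> 0" using True by (simp add: mult_nonneg_nonpos)
      then show ?thesis using True by (simp add: max_def)
    next
      case False
      have dp: "real d ^ n > 0" using d_pos by simp
      then have "real d ^ n * A > 0" using False by simp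
      then show ?thesis using False by (simp add: max_def)
    qed
    ultimately have h: "\<bar>real d ^ n * V w - real d ^ n * max A 0\<bar> \<le> Kc" by simp
    have "\<bar>real d ^ n * V w - real d ^ n * max A 0\<bar> = \<bar>real d ^ n * (V w - max A 0)\<bar>"
      by (simp add: algebra_simps)
    also have "\<dots> = real d ^ n * \<bar>V w - max A 0\<bar>" by (simp add: abs_mult)
    finally have "real d ^ n * \<bar>V w - max A 0\<bar> \<le> Kc" using h by simp
    then show ?thesis unfolding A_def using d_pos by (simp add: field_simps)
  qed
  show ?thesis
  proof (rule ccontr)
    assume ne: "V w \<noteq> max 0 (Re (Ef w))"
    define \<delta> where "\<delta> = \<bar>V w - max (Re (Ef w)) 0\<bar>"
    have dpos: "\<delta> > 0" using ne unfolding \<delta>_def by (auto simp: max.commute)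
    have d1: "real d > 1" using d2 by simp
    obtain n1 where n1: "Kc / \<delta> < real d ^ n1" using real_arch_pow[OF d1] by blast
    define n where "n = max n0 n1"
    have "real d ^ n1 \<le> real d ^ n" unfolding n_def using d1 by (intro power_increasing) auto
    then have "Kc / \<delta> < real d ^ n" using n1 by linarith
    then have "Kc / real d ^ n < \<delta>" using dpos d_pos by (simp add: divide_less_eq mult.commute)
    moreover have "\<delta> \<le> Kc / real d ^ n" unfolding \<delta>_def using est[of n] unfolding n_def by simp
    ultimately show False by simp
  qed
qed

end

context cor begin

definition b0 :: real where "b0 = min \<beta> pi"
lemma b0_pos: "b0 > 0" unfolding b0_def using beta by simp
lemma b0_pi: "b0 \<le> pi" unfolding b0_def by simp

lemma sector': "\<bar>Im w\<bar> < b0 \<Longrightarrow> V w = max 0 (Re (Ef w))"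
  using sector unfolding b0_def by blast

lemma Rek_pos: "Re k > 0"
proof (rule ccontr)
  assume nk: "\<not> Re k > 0"
  define \<sigma> :: real where "\<sigma> = (if Im k \<ge> 0 then 1 else -1)"
  define \<delta>1 where "\<delta>1 = min b0 (pi / (2 * rho))"
  have \<delta>1: "\<delta>1 > 0" unfolding \<delta>1_def using b0_pos rho_pos by simp
  define U where "U = {w. 0 < \<sigma> * Im w \<and> \<sigma> * Im w < \<delta>1}"
  have oU: "open U" unfolding U_def
    by (intro open_Collect_conj open_Collect_less continuous_intros)
  have w1: "\<i> * complex_of_real (\<sigma> * \<delta>1 / 2) \<in> U" unfolding U_def using \<delta>1 by (auto simp: \<sigma>_def)
  have "Im (Psi w) = 0" if wU: "w \<in> U" for w
  proof -
    define t where "t = \<sigma> * Im w"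
    have t: "0 < t" "t < \<delta>1" using wU unfolding U_def t_def by auto
    have Imw: "Im w = \<sigma> * t" unfolding t_def \<sigma>_def by simp
    have wb: "\<bar>Im w\<bar> < b0" using t unfolding Imw \<sigma>_def \<delta>1_def by auto
    have rt: "0 < rho * t" "rho * t < pi / 2"
      using t rho_pos unfolding \<delta>1_def by (auto simp: field_simps)
    have cs: "cos (rho * t) > 0" "sin (rho * t) > 0"
      using rt by (auto intro!: cos_gt_zero sin_gt_zero)
    have "q (Im w) \<le> 0"
    proof (cases "Im k \<ge> 0")
      case True
      then have "q (Im w) = Re k * cos (rho * t) - Im k * sin (rho * t)"
        unfolding q_formula Imw \<sigma>_def by simp
      then show ?thesis using True nk cs by (smt (verit) mult_nonneg_nonneg mult_nonpos_nonneg)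
    next
      case False
      then have "q (Im w) = Re k * cos (rho * t) + Im k * sin (rho * t)"
        unfolding q_formula Imw \<sigma>_def by simp
      then show ?thesis using False nk cs by (smt (verit) mult_nonpos_nonneg mult_pos_pos)
    qed
    then have "Re (Ef w) \<le> 0" unfolding ReEf by (simp add: mult_nonneg_nonpos)
    then have "V w = 0" using sector'[OF wb] by simp
    then show ?thesis by (rule V_zero_real)
  qed
  then show False using NR[OF oU w1] by blast
qed

lemma k_nz: "k \<noteq> 0" using Rek_pos by auto

lemma side:
  assumes \<sigma>: "\<sigma> = 1 \<or> \<sigma> = -1" and \<delta>: "\<delta> > 0" "\<delta> \<le> b0" and th: "\<theta>2 > 0"
    and qpos: "\<And>t. -\<delta> < t \<Longrightarrow> t < \<theta>2 \<Longrightarrow> q (\<sigma> * t) > 0"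
  shows "\<And>w. -\<delta> < \<sigma> * Im w \<Longrightarrow> \<sigma> * Im w < \<theta>2 \<Longrightarrow> V w = Re (Ef w)"
    and "\<And>w. \<sigma> * Im w = \<theta>2 \<Longrightarrow> V w = Re (Ef w)"
proof -
  have ss: "\<sigma> * \<sigma> = 1" using \<sigma> by auto
  define S where "S = {w. -\<delta> < \<sigma> * Im w \<and> \<sigma> * Im w < \<theta>2}"
  have oS: "open S" unfolding S_def by (intro open_Collect_conj open_Collect_less continuous_intros)
  have cS: "convex S"
  proof (cases "\<sigma> = 1")
    case True
    then have "S = {w. -\<delta> < Im w} \<inter> {w. Im w < \<theta>2}" unfolding S_def by auto
    then show ?thesis by (simp add: convex_Int convex_halfspace_Im_gt convex_halfspace_Im_lt)
  next
    case False
    then have s: "\<sigma> = -1" using \<sigma> by simp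
    have "S = {w. -\<theta>2 < Im w} \<inter> {w. Im w < \<delta>}" unfolding S_def s by auto
    then show ?thesis by (simp add: convex_Int convex_halfspace_Im_gt convex_halfspace_Im_lt)
  qed
  have Epos: "Re (Ef w) > 0" if "w \<in> S" for w
  proof -
    have "q (\<sigma> * (\<sigma> * Im w)) > 0" using that qpos unfolding S_def by auto
    then have "q (Im w) > 0" using ss by (simp add: mult.assoc[symmetric])
    then show ?thesis unfolding ReEf by simp
  qed
  define U where "U = {w. \<bar>Im w\<bar> < min \<delta> \<theta>2}"
  have oU: "open U" unfolding U_def by (intro open_Collect_less continuous_intros)
  have US: "U \<subseteq> S" unfolding U_def S_def using \<sigma> by auto
  have zU: "0 \<in> U" unfolding U_def using \<delta> th by simp
  have eqU: "V y = Re (Ef y)" if "y \<in> U" for y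
  proof -
    have "\<bar>Im y\<bar> < b0" using that \<delta> unfolding U_def by auto
    then show ?thesis using sector' Epos[of y] US that by (simp add: subset_iff)
  qed
  have onS: "\<And>z. z \<in> S \<Longrightarrow> V z = Re (Ef z)"
    by (rule continuation[OF oS convex_connected[OF cS] Ef_holo Epos V_cont V_LH US oU zU eqU])
  then show "\<And>w. -\<delta> < \<sigma> * Im w \<Longrightarrow> \<sigma> * Im w < \<theta>2 \<Longrightarrow> V w = Re (Ef w)"
    unfolding S_def by blast
  fix w assume bd: "\<sigma> * Im w = \<theta>2"
  have clo: "closed {z. V z = Re (Ef z)}"
    by (intro closed_Collect_eq V_cont continuous_intros holomorphic_on_imp_continuous_on[OF Ef_holo])
  have "S \<subseteq> {z. V z = Re (Ef z)}" using onS by blast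
  then have "closure S \<subseteq> {z. V z = Re (Ef z)}" using clo by (rule closure_minimal)
  moreover have "w \<in> closure S"
    unfolding closure_approachable
  proof (intro allI impI)
    fix \<epsilon> :: real assume e: "\<epsilon> > 0"
    define t where "t = min \<epsilon> \<theta>2 / 2"
    have t: "0 < t" "t < \<epsilon>" "t < \<theta>2" unfolding t_def using e th by auto
    define y where "y = w - \<i> * complex_of_real (\<sigma> * t)"
    have "\<sigma> * Im y = \<theta>2 - t" unfolding y_def using bd ss by (simp add: algebra_simps)
    then have "y \<in> S" unfolding S_def using t \<delta> by auto
    moreover have "dist y w < \<epsilon>" unfolding y_def dist_norm using \<sigma> t by (auto simp: norm_mult)
    ultimately show "\<exists>y\<in>S. dist y w < \<epsilon>" by blast
  qed
  ultimately show "V w = Re (Ef w)" by blast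
qed

end

context cor begin

lemma q0: "q 0 = Re k" unfolding q_formula by simp

lemma delta_exists: "\<exists>\<delta>>0. \<delta> \<le> b0 \<and> (\<forall>t. \<bar>t\<bar> < \<delta> \<longrightarrow> q t > 0)"
proof -
  have "open {t. 0 < q t}" by (intro open_Collect_less continuous_intros q_cont)
  moreover have "0 \<in> {t. 0 < q t}" using q0 Rek_pos by simp
  ultimately obtain e where e: "e > 0" "ball 0 e \<subseteq> {t. 0 < q t}" using open_contains_ball by blast
  show ?thesis
    using e b0_pos by (intro exI[of _ "min e b0"]) (auto simp: subset_iff dist_real_def)
qed

lemma qpos_side:
  assumes \<sigma>: "\<sigma> = 1 \<or> \<sigma> = -1"
  shows "\<And>t. 0 \<le> t \<Longrightarrow> t < pi \<Longrightarrow> q (\<sigma> * t) > 0"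
proof (rule ccontr)
  fix t' assume t': "0 \<le> t'" "t' < pi" "\<not> q (\<sigma> * t') > 0"
  obtain \<delta> where \<delta>: "\<delta> > 0" "\<delta> \<le> b0" "\<And>t. \<bar>t\<bar> < \<delta> \<Longrightarrow> q t > 0" using delta_exists by blast
  define T where "T = {0..t'} \<inter> {t. q (\<sigma> * t) \<le> 0}"
  have qc: "continuous_on UNIV (\<lambda>t. q (\<sigma> * t))"
    by (rule continuous_on_compose2[OF q_cont]) (auto intro: continuous_intros)
  have cT: "closed T" unfolding T_def
    by (intro closed_Int closed_atLeastAtMost closed_Collect_le qc continuous_intros)
  have t'T: "t' \<in> T" unfolding T_def using t' by simp
  have bT: "bdd_below T" unfolding T_def by (rule bdd_belowI[of _ 0]) auto
  define \<theta>2 where "\<theta>2 = Inf T"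
  have th_in: "\<theta>2 \<in> T" unfolding \<theta>2_def using closed_contains_Inf[OF _ bT cT] t'T by blast
  have th_le: "\<theta>2 \<le> t'" "\<theta>2 \<ge> 0" "q (\<sigma> * \<theta>2) \<le> 0" using th_in unfolding T_def by auto
  have "\<theta>2 \<noteq> 0" using th_le(3) q0 Rek_pos by auto
  then have th_pos: "\<theta>2 > 0" using th_le by simp
  have below: "q (\<sigma> * t) > 0" if "-\<delta> < t" "t < \<theta>2" for t
  proof (cases "t < 0")
    case True
    then have "\<bar>\<sigma> * t\<bar> < \<delta>" using \<sigma> that by auto
    then show ?thesis using \<delta>(3) by blast
  next
    case False
    show ?thesis
    proof (rule ccontr)
      assume "\<not> q (\<sigma> * t) > 0"
      then have "t \<in> T" unfolding T_def using False that th_le by auto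
      then have "\<theta>2 \<le> t" unfolding \<theta>2_def using bT by (rule cInf_lower)
      then show False using that by simp
    qed
  qed
  have "Im (\<Phi> (complex_of_real r * cis (\<sigma> * \<theta>2))) = 0" if r: "r > 0" for r
  proof -
    define w where "w = complex_of_real (ln r) + \<i> * complex_of_real (\<sigma> * \<theta>2)"
    have ss: "\<sigma> * \<sigma> = 1" using \<sigma> by auto
    have "\<sigma> * Im w = \<theta>2" unfolding w_def using ss by (simp add: mult.assoc[symmetric])
    then have "V w = Re (Ef w)" using side(2)[OF \<sigma> \<delta>(1,2) th_pos below] by blast
    also have "\<dots> \<le> 0" unfolding ReEf w_def using th_le(3) by (simp add: mult_nonneg_nonpos)
    finally have "V w = 0" using V_nonneg[of w] by simp
    then have "Im (Psi w) = 0" by (rule V_zero_real)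
    moreover have "exp w = complex_of_real r * cis (\<sigma> * \<theta>2)"
      unfolding w_def using r by (simp add: exp_add exp_of_real cis_conv_exp)
    ultimately show ?thesis unfolding Psi_def by simp
  qed
  then have "sin (\<sigma> * \<theta>2) = 0" by (rule RAY)
  then have "sin \<theta>2 = 0" using \<sigma> by auto
  moreover have "sin \<theta>2 > 0" using th_pos th_le t' by (intro sin_gt_zero) auto
  ultimately show False by simp
qed

lemma qpos: "-pi < \<theta> \<Longrightarrow> \<theta> < pi \<Longrightarrow> q \<theta> > 0"
proof (cases "\<theta> \<ge> 0")
  case True
  assume "\<theta> < pi"
  then show ?thesis using qpos_side[of 1 \<theta>] True by simp
next
  case False
  assume "-pi < \<theta>"
  then show ?thesis using qpos_side[of "-1" "-\<theta>"] False by simp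
qed

lemma rho_le: "rho \<le> 1/2"
proof (rule ccontr)
  assume "\<not> rho \<le> 1/2"
  then have r: "rho > 1/2" by simp
  define \<theta> where "\<theta> = pi / (2 * rho)"
  have th: "0 < \<theta>" "\<theta> < pi" unfolding \<theta>_def using r pi_gt_zero by (auto simp: field_simps)
  have rt: "rho * \<theta> = pi / 2" "rho * (-\<theta>) = - (pi / 2)" unfolding \<theta>_def using rho_pos by auto
  have "q \<theta> = - Im k" unfolding q_formula rt by simp
  moreover have "q (-\<theta>) = Im k" unfolding q_formula rt by simp
  moreover have "q \<theta> > 0" "q (-\<theta>) > 0" using th by (auto intro!: qpos)
  ultimately show False by simp
qed

lemma strip: "\<bar>Im w\<bar> < pi \<Longrightarrow> V w = Re (Ef w)"
proof -
  assume w: "\<bar>Im w\<bar> < pi"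
  have bp: "b0 > 0" "b0 \<le> b0" using b0_pos by auto
  show ?thesis
  proof (cases "Im w \<ge> 0")
    case True
    have "\<And>t. -b0 < t \<Longrightarrow> t < pi \<Longrightarrow> q (1 * t) > 0" using b0_pi by (auto intro!: qpos)
    from side(1)[of 1 b0 pi, OF _ bp pi_gt_zero this] show ?thesis using w True b0_pos by auto
  next
    case False
    have "\<And>t. -b0 < t \<Longrightarrow> t < pi \<Longrightarrow> q (-1 * t) > 0" using b0_pi by (auto intro!: qpos)
    from side(1)[of "-1" b0 pi, OF _ bp pi_gt_zero this] show ?thesis using w False b0_pos by auto
  qed
qed

theorem contradiction: False
proof -
  obtain y where y: "y \<in> \<Phi> ` (complex_of_real ` {x. x < 0})" "norm y > R"
    using unb unfolding bounded_iff by (meson not_le)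
  then obtain x where x: "x < 0" "y = \<Phi> (complex_of_real x)" by auto
  have "\<Phi> (complex_of_real x) \<notin> filled_julia p" using K_ball y x by auto
  then have Gpos: "G (\<Phi> (complex_of_real x)) > 0" by (rule G_pos)
  define w0 where "w0 = complex_of_real (ln (-x)) + \<i> * complex_of_real pi"
  have ew0: "exp w0 = complex_of_real x"
    unfolding w0_def using x by (simp add: exp_add exp_of_real exp_pi_i')
  have "V w0 > 0" unfolding V_def Psi_def ew0 using Gpos .
  then obtain r h where rh: "r > 0" "h holomorphic_on ball w0 r" "\<And>w. w \<in> ball w0 r \<Longrightarrow> V w = Re (h w)"
    using V_LH by blast
  define r1 where "r1 = min r 1"
  have r1: "r1 > 0" "r1 \<le> 1" "ball w0 r1 \<subseteq> ball w0 r" using rh unfolding r1_def by auto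
  have h1: "h holomorphic_on ball w0 r1" using rh(2) r1(3) by (rule holomorphic_on_subset)
  have Imw0: "Im w0 = pi" unfolding w0_def by simp
  have Im_ball: "\<bar>Im w - pi\<bar> < r1" if "w \<in> ball w0 r1" for w
  proof -
    have "\<bar>Im (w0 - w)\<bar> \<le> norm (w0 - w)" by (rule abs_Im_le_cmod)
    also have "\<dots> < r1" using that by (simp add: dist_norm)
    finally show ?thesis using Imw0 by (simp add: abs_minus_commute)
  qed
  have pi1: "pi > 1" using pi_gt3 by simp
  define E2 where "E2 y = Ef (y - 2 * complex_of_real pi * \<i>)" for y
  have E2_holo: "E2 holomorphic_on ball w0 r1" unfolding E2_def[abs_def] Ef_def by (intro holomorphic_intros)
  have reL: "\<And>y. y \<in> ball w0 r1 \<Longrightarrow> Re (h y) = Re (Ef y)"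
  proof (rule re_eq_extend[of "ball w0 r1" h Ef "ball w0 r1 \<inter> {w. Im w < pi}" "w0 - \<i> * complex_of_real (r1/2)"])
    show "h holomorphic_on ball w0 r1" by (rule h1)
    show "Ef holomorphic_on ball w0 r1" by (rule Ef_holo)
    show "open (ball w0 r1 \<inter> {w. Im w < pi})" by (intro open_Int open_ball open_halfspace_Im_lt)
    show "w0 - \<i> * complex_of_real (r1/2) \<in> ball w0 r1 \<inter> {w. Im w < pi}"
      using r1 Imw0 by (simp add: dist_norm norm_mult)
    fix y assume y: "y \<in> ball w0 r1 \<inter> {w. Im w < pi}"
    then have "\<bar>Im y\<bar> < pi" using Im_ball[of y] r1 pi1 by auto
    then have "V y = Re (Ef y)" by (rule strip)
    moreover have "V y = Re (h y)" using y r1 rh(3) by blast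
    ultimately show "Re (h y) = Re (Ef y)" by simp
  qed auto
  have reU: "\<And>y. y \<in> ball w0 r1 \<Longrightarrow> Re (h y) = Re (E2 y)"
  proof (rule re_eq_extend[of "ball w0 r1" h E2 "ball w0 r1 \<inter> {w. pi < Im w}" "w0 + \<i> * complex_of_real (r1/2)"])
    show "h holomorphic_on ball w0 r1" by (rule h1)
    show "E2 holomorphic_on ball w0 r1" by (rule E2_holo)
    show "open (ball w0 r1 \<inter> {w. pi < Im w})" by (intro open_Int open_ball open_halfspace_Im_gt)
    show "w0 + \<i> * complex_of_real (r1/2) \<in> ball w0 r1 \<inter> {w. pi < Im w}"
      using r1 Imw0 by (simp add: dist_norm norm_mult)
    fix y assume y: "y \<in> ball w0 r1 \<inter> {w. pi < Im w}"
    define y' where "y' = y - 2 * complex_of_real pi * \<i>"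
    have "\<bar>Im y'\<bar> < pi" unfolding y'_def using Im_ball[of y] y r1 pi1 by auto
    then have "V y' = Re (Ef y')" by (rule strip)
    moreover have "V y' = V y" unfolding y'_def V_def Psi_def by (simp add: exp_diff)
    moreover have "V y = Re (h y)" using y r1 rh(3) by blast
    ultimately show "Re (h y) = Re (E2 y)" unfolding E2_def y'_def by simp
  qed auto
  define D where "D y = Ef y - E2 y" for y
  have D_holo: "D holomorphic_on ball w0 r1" unfolding D_def[abs_def] by (intro holomorphic_intros Ef_holo E2_holo)
  have "\<And>y. y \<in> ball w0 r1 \<Longrightarrow> D y = D w0"
    by (rule re_zero_const[OF D_holo r1(1)]) (use reL reU in \<open>simp add: D_def\<close>)
  moreover have w1: "w0 + complex_of_real (r1/2) \<in> ball w0 r1" using r1 by (simp add: dist_norm)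
  ultimately have Dw: "D (w0 + complex_of_real (r1/2)) = D w0" by blast
  define M where "M = k * (1 - exp (- (complex_of_real rho * (2 * complex_of_real pi * \<i>))))"
  have Dform: "D y = exp (complex_of_real rho * y) * M" for y
    unfolding D_def E2_def Ef_def M_def by (simp add: algebra_simps exp_diff exp_minus field_simps)
  define X where "X = complex_of_real (exp (rho * (r1/2)))"
  have "complex_of_real rho * (w0 + complex_of_real (r1/2)) = complex_of_real rho * w0 + complex_of_real (rho * (r1/2))"
    by (simp add: algebra_simps)
  then have "exp (complex_of_real rho * (w0 + complex_of_real (r1/2))) = exp (complex_of_real rho * w0) * X"
    unfolding X_def by (simp only: exp_add exp_of_real)
  then have "exp (complex_of_real rho * w0) * (X * M) = exp (complex_of_real rho * w0) * M"
    using Dw unfolding Dform by (simp add: mult.assoc)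
  then have "X * M = M" by simp
  then have "(X - 1) * M = 0" by (simp add: algebra_simps)
  moreover have "X \<noteq> 1" unfolding X_def using rho_pos r1 by simp
  ultimately have "M = 0" by simp
  then have e1: "exp (- (complex_of_real rho * (2 * complex_of_real pi * \<i>))) = 1" unfolding M_def using k_nz by simp
  have "exp (- (complex_of_real rho * (2 * complex_of_real pi * \<i>))) = cis (- (2 * pi * rho))"
    by (simp add: cis_conv_exp algebra_simps)
  then have "cos (2 * pi * rho) = 1" using e1 by (metis cis.sel(1) cos_minus one_complex.sel(1))
  moreover have "cos (2 * pi * rho) < cos 0"
    using rho_pos rho_le by (intro cos_monotone_0_pi) auto
  ultimately show False by simp
qed

end

theorem corollary2:
  fixes p :: "real poly" and d :: nat and lam \<beta> :: real
    and \<Phi> F :: "complex \<Rightarrow> complex" and c :: complex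
  assumes deg: "degree p = d" and d2: "d \<ge> 2"
    and p0: "coeff p 0 = 0"
    and lam: "coeff p 1 = lam" and lam1: "lam > 1"
    and beta: "\<beta> > 0" and Wbeta: "sector \<beta> \<subseteq> basin_infty p"
    and Phi_entire: "\<Phi> holomorphic_on UNIV"
    and Phi_fe: "\<And>z. \<Phi> (complex_of_real lam * z) = cpoly p (\<Phi> z)"
    and Phi0: "\<Phi> 0 = 0" and Phi'0: "deriv \<Phi> 0 = 1"
    and c: "c ^ (d - 1) = 1 / complex_of_real (lead_coeff p)"
    and F_holo: "F holomorphic_on {w. \<bar>Im w\<bar> < \<beta> / ln lam}"
    and F_per: "\<And>w. \<bar>Im w\<bar> < \<beta> / ln lam \<Longrightarrow> F (w + 1) = F w"
    and asym: "\<And>\<epsilon> M \<eta>. \<epsilon> > 0 \<Longrightarrow> M > 0 \<Longrightarrow> \<eta> > 0 \<Longrightarrow>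
       \<exists>R. \<forall>z. norm z > R \<and> \<bar>Arg z\<bar> \<le> \<beta> - \<epsilon> \<longrightarrow>
         (\<exists>e. \<Phi> z = c * exp (z powr complex_of_real (ln (real d) / ln lam)
                                  * F (clog_base lam z) + e)
              \<and> norm e \<le> \<eta> * norm z powr (- M))"
    and J: "julia p \<subseteq> complex_of_real ` {..0}"
    and unb: "\<not> bounded (\<Phi> ` (complex_of_real ` {x. x < 0}))"
  shows "\<not> (\<exists>k. \<forall>w. \<bar>Im w\<bar> < \<beta> / ln lam \<longrightarrow> F w = k)"
proof
  assume "\<exists>k. \<forall>w. \<bar>Im w\<bar> < \<beta> / ln lam \<longrightarrow> F w = k"
  then obtain k where Fk: "\<And>w. \<bar>Im w\<bar> < \<beta> / ln lam \<Longrightarrow> F w = k" by blast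
  have lnl: "ln lam > 0" using lam1 by simp
  have asymk: "\<exists>R. \<forall>z. norm z > R \<and> z \<noteq> 0 \<and> \<bar>Arg z\<bar> \<le> \<beta> - \<epsilon> \<longrightarrow>
         (\<exists>e. \<Phi> z = c * exp (z powr complex_of_real (ln (real d) / ln lam) * k + e)
              \<and> norm e \<le> \<eta> * norm z powr (- M))"
    if h: "\<epsilon> > 0" "M > 0" "\<eta> > 0" for \<epsilon> M \<eta>
  proof -
    obtain R where R: "\<And>z. norm z > R \<and> \<bar>Arg z\<bar> \<le> \<beta> - \<epsilon> \<Longrightarrow>
         (\<exists>e. \<Phi> z = c * exp (z powr complex_of_real (ln (real d) / ln lam) * F (clog_base lam z) + e)
              \<and> norm e \<le> \<eta> * norm z powr (- M))"
      using asym[OF h] by blast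
    have Fz: "F (clog_base lam z) = k" if z: "z \<noteq> 0" "\<bar>Arg z\<bar> \<le> \<beta> - \<epsilon>" for z
    proof (rule Fk)
      have "Im (clog_base lam z) = Arg z / ln lam"
        unfolding clog_base_def using z by (simp add: Im_divide_of_real Arg_eq_Im_Ln)
      moreover have "\<bar>Arg z\<bar> / ln lam < \<beta> / ln lam"
        using z h lnl by (intro divide_strict_right_mono) auto
      ultimately show "\<bar>Im (clog_base lam z)\<bar> < \<beta> / ln lam" using lnl by (simp add: abs_div)
    qed
    show ?thesis
    proof (intro exI[of _ R] allI impI)
      fix z assume zz: "norm z > R \<and> z \<noteq> 0 \<and> \<bar>Arg z\<bar> \<le> \<beta> - \<epsilon>"
      then have fk: "F (clog_base lam z) = k" using Fz by blast
      from R[of z] zz obtain e where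
        e: "\<Phi> z = c * exp (z powr complex_of_real (ln (real d) / ln lam) * F (clog_base lam z) + e)"
           "norm e \<le> \<eta> * norm z powr (- M)" by blast
      show "\<exists>e. \<Phi> z = c * exp (z powr complex_of_real (ln (real d) / ln lam) * k + e)
              \<and> norm e \<le> \<eta> * norm z powr (- M)"
        using e unfolding fk by blast
    qed
  qed
  have I: "cor p d lam \<beta> \<Phi> c k"
  proof (intro cor.intro pd.intro cor_axioms.intro)
    show "degree p = d" by (rule deg)
    show "2 \<le> d" by (rule d2)
    show "lam > 1" by (rule lam1)
    show "\<beta> > 0" by (rule beta)
    show "\<Phi> holomorphic_on UNIV" by (rule Phi_entire)
    show "\<And>z. \<Phi> (complex_of_real lam * z) = cpoly p (\<Phi> z)" by (rule Phi_fe)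
    show "\<Phi> 0 = 0" by (rule Phi0)
    show "deriv \<Phi> 0 = 1" by (rule Phi'0)
    show "c ^ (d - 1) = 1 / complex_of_real (lead_coeff p)" by (rule c)
    show "julia p \<subseteq> complex_of_real ` {..0}" by (rule J)
    show "\<not> bounded (\<Phi> ` (complex_of_real ` {x. x < 0}))" by (rule unb)
  qed (rule asymk)
  show False by (rule cor.contradiction[OF I])
qed

end
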